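(* Let $A=\{0,1,2\}$, let $T\colon A^4\to A$ be given by $T(1,1,2,2)=T(1,2,1,2)=1$ and $T(\mathbf{x})=0$ for all other $\mathbf{x}\in A^4$, and let $f\colon A^2\to A$ be given by $f(x,y)=1$ if $\{x,y\}=\{1,2\}$ and $f(x,y)=0$ otherwise. Then $f\in\{T\}^{**}$, and the graph of $f$ is primitive positively definable from the graph of $T$: \[\{(x_2,x_3,x_5)\in A^3: f(x_2,x_3)=x_5\}=\Bigl\{(x_2,x_3,x_5)\in A^3:\exists x_1,x_4\in A\colon T(x_1,x_2,x_3,x_4)=x_5\wedge T(x_2,x_3,x_2,x_3)=T(x_1,x_2,x_4,x_3)\wedge T(x_3,x_2,x_3,x_2)=T(x_1,x_3,x_4,x_2)\Bigr\},\] which also equals $\{(x_2,x_3,x_5)\in A^3:\exists x_1,x_4,u,v\in A\colon T(x_1,x_2,x_3,x_4)=x_5\wedge T(x_2,x_3,x_2,x_3)=u\wedge T(x_1,x_2,x_4,x_3)=u\wedge T(x_3,x_2,x_3,x_2)=v\wedge T(x_1,x_3,x_4,x_2)=v\}$.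
   Context: An $m$-ary $g$ commutes with an $n$-ary $h$ if $g\bigl((h((x_{ij})_{j}))_{i}\bigr)=h\bigl((g((x_{ij})_{i}))_{j}\bigr)$ for all $(x_{ij})\in A^{m\times n}$. For a set $F$ of finitary operations on $A$ (positive arity), $F^*$ is the set of all such operations commuting with every member of $F$, and $F^{**}=(F^* )^*$. *)

theory Defs
  imports Main
begin

text \<open>A finitary operation on a carrier A is represented as a pair (n, g) with
  arity n > 0 and g applied to argument lists of length n over A.\<close>

type_synonym 'a operation = "nat \<times> ('a list \<Rightarrow> 'a)"

definition ops :: "'a set \<Rightarrow> 'a operation set" where
  "ops A = {(n, g). 0 < n \<and> (\<forall>xs. set xs \<subseteq> A \<and> length xs = n \<longrightarrow> g xs \<in> A)}"

definition commutes :: "'a set \<Rightarrow> 'a operation \<Rightarrow> 'a operation \<Rightarrow> bool" where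
  "commutes A p q \<longleftrightarrow>
     (\<forall>x :: nat \<Rightarrow> nat \<Rightarrow> 'a. (\<forall>i < fst p. \<forall>j < fst q. x i j \<in> A) \<longrightarrow>
        snd p (map (\<lambda>i. snd q (map (\<lambda>j. x i j) [0..<fst q])) [0..<fst p])
      = snd q (map (\<lambda>j. snd p (map (\<lambda>i. x i j) [0..<fst p])) [0..<fst q]))"

definition centralizer :: "'a set \<Rightarrow> 'a operation set \<Rightarrow> 'a operation set" where
  "centralizer A F = {p \<in> ops A. \<forall>q \<in> F. commutes A p q}"

definition A3 :: "nat set" where "A3 = {0, 1, 2}"

definition T4 :: "nat list \<Rightarrow> nat" where
  "T4 xs = (if xs = [1,1,2,2] \<or> xs = [1,2,1,2] then 1 else 0)"

definition f2 :: "nat list \<Rightarrow> nat" where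
  "f2 xs = (if xs = [1,2] \<or> xs = [2,1] then 1 else 0)"

end

theory Submission
  imports Defs
begin

lemma bexA3: "(\<exists>x\<in>A3. P x) = (P 0 \<or> P 1 \<or> P 2)" by (auto simp: A3_def)
lemma pp:
  assumes "x2 \<in> A3" "x3 \<in> A3" "x5 \<in> A3"
  shows "(f2 [x2, x3] = x5) \<longleftrightarrow> (\<exists>x1 \<in> A3. \<exists>x4 \<in> A3. T4 [x1, x2, x3, x4] = x5
              \<and> T4 [x2, x3, x2, x3] = T4 [x1, x2, x4, x3]
              \<and> T4 [x3, x2, x3, x2] = T4 [x1, x3, x4, x2])"
  unfolding bexA3 using assms unfolding A3_def insert_iff empty_iff
  apply (elim disjE)
  apply (simp_all add: T4_def f2_def)
  done

lemma f2_in: "f2 xs \<in> A3" by (simp add: f2_def A3_def)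
lemma T4_in: "T4 xs \<in> A3" by (simp add: T4_def A3_def)

lemma pres:
  assumes "commutes A3 (m,g) (4,T4)"
    and "\<forall>i<m. a i \<in> A3 \<and> b i \<in> A3 \<and> c i \<in> A3 \<and> d i \<in> A3"
  shows "g (map (\<lambda>i. T4 [a i, b i, c i, d i]) [0..<m])
       = T4 [g (map a [0..<m]), g (map b [0..<m]), g (map c [0..<m]), g (map d [0..<m])]"
proof -
  let ?x = "\<lambda>i j. [a i, b i, c i, d i] ! j"
  have h: "\<forall>i < m. \<forall>j < 4. ?x i j \<in> A3"
  proof (intro allI impI)
    fix i j assume "i < m" "(j::nat) < 4"
    then show "?x i j \<in> A3" using assms(2)
      by (auto simp: nth_Cons' eval_nat_numeral less_Suc_eq)
  qed
  have "g (map (\<lambda>i. T4 (map (\<lambda>j. ?x i j) [0..<4])) [0..<m])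
      = T4 (map (\<lambda>j. g (map (\<lambda>i. ?x i j) [0..<m])) [0..<4])"
    using assms(1) h unfolding commutes_def by auto
  then show ?thesis by (simp add: eval_nat_numeral upt_Suc)
qed

lemma ops_in: "(m,g) \<in> ops A3 \<Longrightarrow> (\<forall>i<m. a i \<in> A3) \<Longrightarrow> g (map a [0..<m]) \<in> A3"
proof -
  assume a1: "(m,g) \<in> ops A3" and a2: "\<forall>i<m. a i \<in> A3"
  have "set (map a [0..<m]) \<subseteq> A3" using a2 by auto
  then show ?thesis using a1 unfolding ops_def by auto
qed

lemma main1: "(2, f2) \<in> centralizer A3 (centralizer A3 {(4, T4)})"
  unfolding centralizer_def
proof (safe)
  show "(2, f2) \<in> ops A3" unfolding ops_def using f2_in by auto
next
  fix m g assume op: "(m, g) \<in> ops A3" and cT: "\<forall>q\<in>{(4, T4)}. commutes A3 (m, g) q"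
  have cT': "commutes A3 (m,g) (4,T4)" using cT by auto
  show "commutes A3 (2, f2) (m, g)" unfolding commutes_def
  proof (intro allI impI)
    fix x :: "nat \<Rightarrow> nat \<Rightarrow> nat"
    assume xA: "\<forall>i<fst (2::nat, f2). \<forall>j<fst (m, g). x i j \<in> A3"
    have x0: "\<forall>j<m. x 0 j \<in> A3" and x1: "\<forall>j<m. x 1 j \<in> A3" using xA by auto
    have "\<forall>j. \<exists>w. j < m \<longrightarrow> fst w \<in> A3 \<and> snd w \<in> A3 \<and>
         T4 [fst w, x 0 j, x 1 j, snd w] = f2 [x 0 j, x 1 j]
              \<and> T4 [x 0 j, x 1 j, x 0 j, x 1 j] = T4 [fst w, x 0 j, snd w, x 1 j]
              \<and> T4 [x 1 j, x 0 j, x 1 j, x 0 j] = T4 [fst w, x 1 j, snd w, x 0 j]"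
    proof
      fix j show "\<exists>w. j < m \<longrightarrow> fst w \<in> A3 \<and> snd w \<in> A3 \<and>
         T4 [fst w, x 0 j, x 1 j, snd w] = f2 [x 0 j, x 1 j]
              \<and> T4 [x 0 j, x 1 j, x 0 j, x 1 j] = T4 [fst w, x 0 j, snd w, x 1 j]
              \<and> T4 [x 1 j, x 0 j, x 1 j, x 0 j] = T4 [fst w, x 1 j, snd w, x 0 j]"
      proof (cases "j < m")
        case True
        then have "\<exists>x1 \<in> A3. \<exists>x4 \<in> A3. T4 [x1, x 0 j, x 1 j, x4] = f2 [x 0 j, x 1 j]
              \<and> T4 [x 0 j, x 1 j, x 0 j, x 1 j] = T4 [x1, x 0 j, x4, x 1 j]
              \<and> T4 [x 1 j, x 0 j, x 1 j, x 0 j] = T4 [x1, x 1 j, x4, x 0 j]"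
          using pp[of "x 0 j" "x 1 j" "f2 [x 0 j, x 1 j]"] x0 x1 f2_in by blast
        then show ?thesis by force
      qed auto
    qed
    then obtain W where W: "\<forall>j<m. fst (W j) \<in> A3 \<and> snd (W j) \<in> A3 \<and>
         T4 [fst (W j), x 0 j, x 1 j, snd (W j)] = f2 [x 0 j, x 1 j]
              \<and> T4 [x 0 j, x 1 j, x 0 j, x 1 j] = T4 [fst (W j), x 0 j, snd (W j), x 1 j]
              \<and> T4 [x 1 j, x 0 j, x 1 j, x 0 j] = T4 [fst (W j), x 1 j, snd (W j), x 0 j]"
      by metis
    define w1 where "w1 = (\<lambda>j. fst (W j))"
    define w4 where "w4 = (\<lambda>j. snd (W j))"
    have all: "\<forall>i<m. w1 i \<in> A3 \<and> x 0 i \<in> A3 \<and> x 1 i \<in> A3 \<and> w4 i \<in> A3"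
      using W x0 x1 unfolding w1_def w4_def by auto
    let ?A = "g (map w1 [0..<m])" and ?B = "g (map (x 0) [0..<m])"
      and ?C = "g (map (x 1) [0..<m])" and ?D = "g (map w4 [0..<m])"
      and ?E = "g (map (\<lambda>j. f2 [x 0 j, x 1 j]) [0..<m])"
    have e1: "?E = T4 [?A, ?B, ?C, ?D]"
    proof -
      have "map (\<lambda>j. f2 [x 0 j, x 1 j]) [0..<m] = map (\<lambda>i. T4 [w1 i, x 0 i, x 1 i, w4 i]) [0..<m]"
        using W unfolding w1_def w4_def by (intro map_cong) auto
      then have "?E = g (map (\<lambda>i. T4 [w1 i, x 0 i, x 1 i, w4 i]) [0..<m])" by (simp only:)
      also have "\<dots> = T4 [?A, ?B, ?C, ?D]" by (rule pres[OF cT']) (use all in auto)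
      finally show ?thesis .
    qed
    have e2: "T4 [?B, ?C, ?B, ?C] = T4 [?A, ?B, ?D, ?C]"
    proof -
      have "map (\<lambda>i. T4 [x 0 i, x 1 i, x 0 i, x 1 i]) [0..<m] = map (\<lambda>i. T4 [w1 i, x 0 i, w4 i, x 1 i]) [0..<m]"
        using W unfolding w1_def w4_def by (intro map_cong) auto
      then show ?thesis using pres[OF cT', of "x 0" "x 1" "x 0" "x 1"]
          pres[OF cT', of w1 "x 0" w4 "x 1"] all by (metis (no_types, lifting))
    qed
    have e3: "T4 [?C, ?B, ?C, ?B] = T4 [?A, ?C, ?D, ?B]"
    proof -
      have "map (\<lambda>i. T4 [x 1 i, x 0 i, x 1 i, x 0 i]) [0..<m] = map (\<lambda>i. T4 [w1 i, x 1 i, w4 i, x 0 i]) [0..<m]"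
        using W unfolding w1_def w4_def by (intro map_cong) auto
      then show ?thesis using pres[OF cT', of "x 1" "x 0" "x 1" "x 0"]
          pres[OF cT', of w1 "x 1" w4 "x 0"] all by (metis (no_types, lifting))
    qed
    have inA: "?A \<in> A3" "?B \<in> A3" "?C \<in> A3" "?D \<in> A3" "?E \<in> A3"
      using ops_in[OF op] all f2_in by auto
    have "f2 [?B, ?C] = ?E"
    proof (rule pp[OF inA(2,3,5), THEN iffD2])
      show "\<exists>x1 \<in> A3. \<exists>x4 \<in> A3. T4 [x1, ?B, ?C, x4] = ?E
              \<and> T4 [?B, ?C, ?B, ?C] = T4 [x1, ?B, x4, ?C]
              \<and> T4 [?C, ?B, ?C, ?B] = T4 [x1, ?C, x4, ?B]"
        using inA(1,4) e1 e2 e3 by (intro bexI[of _ ?A] bexI[of _ ?D]) auto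
    qed
    then show "snd (2::nat, f2) (map (\<lambda>i. snd (m, g) (map (x i) [0..<fst (m, g)])) [0..<fst (2::nat, f2)]) =
       snd (m, g) (map (\<lambda>j. snd (2::nat, f2) (map (\<lambda>i. x i j) [0..<fst (2::nat, f2)])) [0..<fst (m, g)])"
      by (simp add: eval_nat_numeral upt_Suc)
  qed
qed

theorem lemma3p12:
  shows "(2, f2) \<in> centralizer A3 (centralizer A3 {(4, T4)})
    \<and> {(x2, x3, x5). x2 \<in> A3 \<and> x3 \<in> A3 \<and> x5 \<in> A3 \<and> f2 [x2, x3] = x5}
      = {(x2, x3, x5). x2 \<in> A3 \<and> x3 \<in> A3 \<and> x5 \<in> A3 \<and>
           (\<exists>x1 \<in> A3. \<exists>x4 \<in> A3. T4 [x1, x2, x3, x4] = x5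
              \<and> T4 [x2, x3, x2, x3] = T4 [x1, x2, x4, x3]
              \<and> T4 [x3, x2, x3, x2] = T4 [x1, x3, x4, x2])}
    \<and> {(x2, x3, x5). x2 \<in> A3 \<and> x3 \<in> A3 \<and> x5 \<in> A3 \<and>
           (\<exists>x1 \<in> A3. \<exists>x4 \<in> A3. T4 [x1, x2, x3, x4] = x5
              \<and> T4 [x2, x3, x2, x3] = T4 [x1, x2, x4, x3]
              \<and> T4 [x3, x2, x3, x2] = T4 [x1, x3, x4, x2])}
      = {(x2, x3, x5). x2 \<in> A3 \<and> x3 \<in> A3 \<and> x5 \<in> A3 \<and>
           (\<exists>x1 \<in> A3. \<exists>x4 \<in> A3. \<exists>u \<in> A3. \<exists>v \<in> A3. T4 [x1, x2, x3, x4] = x5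
              \<and> T4 [x2, x3, x2, x3] = u \<and> T4 [x1, x2, x4, x3] = u
              \<and> T4 [x3, x2, x3, x2] = v \<and> T4 [x1, x3, x4, x2] = v)}"
proof -
  let ?P = "\<lambda>x2 x3 x5. (\<exists>x1 \<in> A3. \<exists>x4 \<in> A3. T4 [x1, x2, x3, x4] = x5
              \<and> T4 [x2, x3, x2, x3] = T4 [x1, x2, x4, x3]
              \<and> T4 [x3, x2, x3, x2] = T4 [x1, x3, x4, x2])"
  let ?Q = "\<lambda>x2 x3 x5. (\<exists>x1 \<in> A3. \<exists>x4 \<in> A3. \<exists>u \<in> A3. \<exists>v \<in> A3. T4 [x1, x2, x3, x4] = x5
              \<and> T4 [x2, x3, x2, x3] = u \<and> T4 [x1, x2, x4, x3] = u
              \<and> T4 [x3, x2, x3, x2] = v \<and> T4 [x1, x3, x4, x2] = v)"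
  have PQ: "?P x2 x3 x5 = ?Q x2 x3 x5" for x2 x3 x5
  proof
    assume "?P x2 x3 x5"
    then obtain x1 x4 where "x1 \<in> A3" "x4 \<in> A3" "T4 [x1, x2, x3, x4] = x5"
              "T4 [x2, x3, x2, x3] = T4 [x1, x2, x4, x3]"
              "T4 [x3, x2, x3, x2] = T4 [x1, x3, x4, x2]" by blast
    then show "?Q x2 x3 x5" using T4_in by metis
  next
    assume "?Q x2 x3 x5" then show "?P x2 x3 x5" by metis
  qed
  have S1: "(f2 [x2, x3] = x5) = ?P x2 x3 x5" if "x2 \<in> A3" "x3 \<in> A3" "x5 \<in> A3" for x2 x3 x5
    using pp[OF that] by simp
  have E1: "{(x2, x3, x5). x2 \<in> A3 \<and> x3 \<in> A3 \<and> x5 \<in> A3 \<and> f2 [x2, x3] = x5}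
      = {(x2, x3, x5). x2 \<in> A3 \<and> x3 \<in> A3 \<and> x5 \<in> A3 \<and> ?P x2 x3 x5}"
    using S1 by blast
  have E2: "{(x2, x3, x5). x2 \<in> A3 \<and> x3 \<in> A3 \<and> x5 \<in> A3 \<and> ?P x2 x3 x5}
      = {(x2, x3, x5). x2 \<in> A3 \<and> x3 \<in> A3 \<and> x5 \<in> A3 \<and> ?Q x2 x3 x5}"
    using PQ by simp
  show ?thesis using main1 E1 E2 by blast
qed

end
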